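(* Let $n\ge2$ and let $a_2,\dots,a_n$ be distinct real numbers with each $a_i<0$ or $a_i>1$; let $F(a)=(a-1)\prod_{i=2}^n(a-a_i)$ and $0<a<1$. Put $\epsilon_i=+1$ if $a_i<0$ and $\epsilon_i=-1$ if $a_i>1$, and let $c>0$, $\xi_i>0$ ($i=2,\dots,n$). Consider the superintegrable system of the construction below with $$x(a)=\frac{c}{\sqrt{1-a}}-\sum_{i=2}^n\frac{\epsilon_i(-\epsilon_ia_i)^{3/2}\xi_i}{\sqrt{\epsilon_i(a-a_i)}}.$$ Under $u=\sqrt{a/(1-a)}\in(0,\infty)$ its metric becomes $$g=(1+u^2)\,\frac{\mu^2(u)\,du^2+dy^2}{u^2},\qquad \mu(u)=c+\sum_{i=2}^n\frac{\xi_i}{(1+\rho_iu^2)^{3/2}},\qquad \rho_i=1-\frac1{a_i}\in(0,1)\cup(1,\infty),$$ with $u\in(0,\infty)$, $y\in\mathbb{R}$, and this metric together with the integrals $S_1,S_2$ is globally defined on $M\cong\mathbb{H}^2$.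
   Context: Construction: with roots $a_1=1,a_2,\dots,a_n$ of $F=\sum_kA_ka^k$, on $(a,y)\in(0,1)\times\mathbb{R}$ put $H=\Pi^2+aP_y^2$, $\Pi=\frac a{\dot x}P_a$ (geodesic Hamiltonian of $g=\dot x^2a^{-2}da^2+a^{-1}dy^2$), $\Delta_i=\epsilon_i(a-a_i)$ ($\epsilon_1=-1$), and write $x=\sum_i\xi'_i\Delta_i^{-1/2}$ (here $\xi'_1=c$, $\xi'_i=-\epsilon_i(-\epsilon_ia_i)^{3/2}\xi_i$). Then $G=\sum_{k=0}^nA_{n-k}H^{n-k}P_y^{2k}$, $Q_1=\sum_{k=1}^n\tilde b_kH^{n-k}\Pi P_y^{2k-1}$, $Q_2=\sum_{k=1}^n\tilde c_kH^{n-k}P_y^{2k}$, $S_1=Q_1+yG$, $S_2=Q_2+yQ_1+\frac{y^2}2G$, where $\tilde b_k=(-1)^k\sum_i\frac{\xi'_i}{\sqrt{\Delta_i}}\sigma^i_{k-1}$, $\tilde c_k=\frac{(-1)^{k+1}}2\big(\sum_i\frac{\xi_i'^2}{\Delta_i}\sigma^i_{k-1}+\sum_{i\ne j}\frac{\xi'_i\xi'_j}{\sqrt{\Delta_i\Delta_j}}(\sigma^{ij}_{k-1}+a\sigma^{ij}_{k-2})\big)$; $\sigma^i_m$ defined by $\prod_{l\ne i}(a-a_l)=\sum_{m=0}^{n-1}(-1)^m\sigma^i_ma^{n-1-m}$, $\sigma^i_{-1}=\sigma^i_n=0$, and $\sigma^{ij}_m$ by $\prod_{l\ne i,j}(a-a_l)=\sum_{m=0}^{n-2}(-1)^m\sigma^{ij}_ma^{n-2-m}$,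 $\sigma^{ij}_{-2}=\sigma^{ij}_{-1}=\sigma^{ij}_{n-1}=\sigma^{ij}_n=0$. "Globally defined on $M\cong\mathbb{H}^2$" means: $g$ is a smooth Riemannian metric on the whole domain $M=\{(u,y):u>0\}$, there is a smooth diffeomorphism $t=t(u)$ of $(0,\infty)$ onto $(0,\infty)$ with $g=\Phi\,(dt^2+dy^2)/t^2$ for a smooth positive function $\Phi$ (so $(M,g)$ is conformal to the Poincaré half-plane), and $S_1,S_2$ are smooth functions on $T^*M$. *)

theory Defs
  imports "HOL-Analysis.Analysis" "HOL-Computational_Algebra.Polynomial"
begin

fun C_on :: "nat \<Rightarrow> ('a::euclidean_space) set \<Rightarrow> ('a \<Rightarrow> real) \<Rightarrow> bool" where
  "C_on 0 S f = continuous_on S f"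
| "C_on (Suc k) S f =
     ((\<forall>x\<in>S. f differentiable (at x)) \<and>
      (\<forall>b\<in>Basis. C_on k S (\<lambda>x. frechet_derivative f (at x) b)))"

definition smooth_on :: "('a::euclidean_space) set \<Rightarrow> ('a \<Rightarrow> real) \<Rightarrow> bool" where
  "smooth_on S f \<longleftrightarrow> (\<forall>k. C_on k S f)"

definition diffeo_pos :: "(real \<Rightarrow> real) \<Rightarrow> bool" where
  "diffeo_pos t \<longleftrightarrow> bij_betw t {0<..} {0<..} \<and> smooth_on {0<..} t
      \<and> smooth_on {0<..} (inv_into {0<..} t)"

section \<open>The construction (roots r 1 .. r n, signs e i, constants xp i = xi'_i)\<close>

definition Delta :: "(nat \<Rightarrow> real) \<Rightarrow> (nat \<Rightarrow> real) \<Rightarrow> nat \<Rightarrow> real \<Rightarrow> real" where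
  "Delta e r i a = e i * (a - r i)"

definition xcon :: "nat \<Rightarrow> (nat \<Rightarrow> real) \<Rightarrow> (nat \<Rightarrow> real) \<Rightarrow> (nat \<Rightarrow> real) \<Rightarrow> real \<Rightarrow> real" where
  "xcon n e r xp a = (\<Sum>i=1..n. xp i / sqrt (Delta e r i a))"

definition Acoef :: "nat \<Rightarrow> (nat \<Rightarrow> real) \<Rightarrow> nat \<Rightarrow> real" where
  "Acoef n r k = coeff (\<Prod>i=1..n. [:- r i, 1:]) k"

definition sig1 :: "nat \<Rightarrow> (nat \<Rightarrow> real) \<Rightarrow> nat \<Rightarrow> int \<Rightarrow> real" where
  "sig1 n r i m = (if 0 \<le> m \<and> m \<le> int n - 1
      then (-1) ^ nat m * coeff (\<Prod>l\<in>{1..n} - {i}. [:- r l, 1:]) (n - 1 - nat m) else 0)"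

definition sig2 :: "nat \<Rightarrow> (nat \<Rightarrow> real) \<Rightarrow> nat \<Rightarrow> nat \<Rightarrow> int \<Rightarrow> real" where
  "sig2 n r i j m = (if 0 \<le> m \<and> m \<le> int n - 2
      then (-1) ^ nat m * coeff (\<Prod>l\<in>{1..n} - {i, j}. [:- r l, 1:]) (n - 2 - nat m) else 0)"

definition btil :: "nat \<Rightarrow> (nat \<Rightarrow> real) \<Rightarrow> (nat \<Rightarrow> real) \<Rightarrow> (nat \<Rightarrow> real) \<Rightarrow> nat \<Rightarrow> real \<Rightarrow> real" where
  "btil n e r xp k a = (-1) ^ k *
     (\<Sum>i=1..n. xp i / sqrt (Delta e r i a) * sig1 n r i (int k - 1))"

definition ctil :: "nat \<Rightarrow> (nat \<Rightarrow> real) \<Rightarrow> (nat \<Rightarrow> real) \<Rightarrow> (nat \<Rightarrow> real) \<Rightarrow> nat \<Rightarrow> real \<Rightarrow> real" where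
  "ctil n e r xp k a = (-1) ^ (k + 1) / 2 *
     ((\<Sum>i=1..n. (xp i)\<^sup>2 / Delta e r i a * sig1 n r i (int k - 1))
      + (\<Sum>i\<in>{1..n}. \<Sum>j\<in>{1..n} - {i}.
           xp i * xp j / sqrt (Delta e r i a * Delta e r j a)
           * (sig2 n r i j (int k - 1) + a * sig2 n r i j (int k - 2))))"

definition Picon :: "nat \<Rightarrow> (nat \<Rightarrow> real) \<Rightarrow> (nat \<Rightarrow> real) \<Rightarrow> (nat \<Rightarrow> real) \<Rightarrow> real \<Rightarrow> real \<Rightarrow> real" where
  "Picon n e r xp a Pa = a / deriv (xcon n e r xp) a * Pa"

definition Hcon :: "nat \<Rightarrow> (nat \<Rightarrow> real) \<Rightarrow> (nat \<Rightarrow> real) \<Rightarrow> (nat \<Rightarrow> real) \<Rightarrow> real \<Rightarrow> real \<Rightarrow> real \<Rightarrow> real" where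
  "Hcon n e r xp a Pa Py = (Picon n e r xp a Pa)\<^sup>2 + a * Py\<^sup>2"

definition Gcon :: "nat \<Rightarrow> (nat \<Rightarrow> real) \<Rightarrow> (nat \<Rightarrow> real) \<Rightarrow> (nat \<Rightarrow> real) \<Rightarrow> real \<Rightarrow> real \<Rightarrow> real \<Rightarrow> real" where
  "Gcon n e r xp a Pa Py =
     (\<Sum>k=0..n. Acoef n r (n - k) * (Hcon n e r xp a Pa Py) ^ (n - k) * Py ^ (2 * k))"

definition Q1con :: "nat \<Rightarrow> (nat \<Rightarrow> real) \<Rightarrow> (nat \<Rightarrow> real) \<Rightarrow> (nat \<Rightarrow> real) \<Rightarrow> real \<Rightarrow> real \<Rightarrow> real \<Rightarrow> real" where
  "Q1con n e r xp a Pa Py =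
     (\<Sum>k=1..n. btil n e r xp k a * (Hcon n e r xp a Pa Py) ^ (n - k)
                 * Picon n e r xp a Pa * Py ^ (2 * k - 1))"

definition Q2con :: "nat \<Rightarrow> (nat \<Rightarrow> real) \<Rightarrow> (nat \<Rightarrow> real) \<Rightarrow> (nat \<Rightarrow> real) \<Rightarrow> real \<Rightarrow> real \<Rightarrow> real \<Rightarrow> real" where
  "Q2con n e r xp a Pa Py =
     (\<Sum>k=1..n. ctil n e r xp k a * (Hcon n e r xp a Pa Py) ^ (n - k) * Py ^ (2 * k))"

definition S1con :: "nat \<Rightarrow> (nat \<Rightarrow> real) \<Rightarrow> (nat \<Rightarrow> real) \<Rightarrow> (nat \<Rightarrow> real) \<Rightarrow> real \<Rightarrow> real \<Rightarrow> real \<Rightarrow> real \<Rightarrow> real" where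
  "S1con n e r xp a y Pa Py = Q1con n e r xp a Pa Py + y * Gcon n e r xp a Pa Py"

definition S2con :: "nat \<Rightarrow> (nat \<Rightarrow> real) \<Rightarrow> (nat \<Rightarrow> real) \<Rightarrow> (nat \<Rightarrow> real) \<Rightarrow> real \<Rightarrow> real \<Rightarrow> real \<Rightarrow> real \<Rightarrow> real" where
  "S2con n e r xp a y Pa Py = Q2con n e r xp a Pa Py + y * Q1con n e r xp a Pa Py
      + y\<^sup>2 / 2 * Gcon n e r xp a Pa Py"

definition g_aa :: "nat \<Rightarrow> (nat \<Rightarrow> real) \<Rightarrow> (nat \<Rightarrow> real) \<Rightarrow> (nat \<Rightarrow> real) \<Rightarrow> real \<Rightarrow> real" where
  "g_aa n e r xp a = (deriv (xcon n e r xp) a)\<^sup>2 / a\<^sup>2"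

definition g_yy :: "real \<Rightarrow> real" where
  "g_yy a = 1 / a"

section \<open>The change of variables u = sqrt(a/(1-a)), i.e. a = u^2/(1+u^2)\<close>

definition acoord :: "real \<Rightarrow> real" where
  "acoord u = u\<^sup>2 / (1 + u\<^sup>2)"


end

theory Submission
  imports Defs
begin

declare C_on.simps(2)[simp del]

lemma C_on_Suc_iff: "C_on (Suc k) S f \<longleftrightarrow> ((\<forall>x\<in>S. f differentiable (at x)) \<and>
      (\<forall>b\<in>Basis. C_on k S (\<lambda>x. frechet_derivative f (at x) b)))"
  by (rule C_on.simps(2))

lemma C_on_cong:
  assumes "open S" "\<And>x. x \<in> S \<Longrightarrow> f x = g x" "C_on k S f"
  shows "C_on k S g"
  using assms(2,3)
proof (induction k arbitrary: f g)
  case 0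
  then show ?case using continuous_on_cong by (metis C_on.simps(1))
next
  case (Suc k)
  have fd: "\<forall>x\<in>S. f differentiable (at x)" and fC: "\<forall>b\<in>Basis. C_on k S (\<lambda>x. frechet_derivative f (at x) b)"
    using Suc.prems(2) unfolding C_on_Suc_iff by blast+
  have d: "\<forall>x\<in>S. g differentiable (at x)"
    using fd Suc.prems(1) assms(1) by (metis differentiable_def has_derivative_transform_within_open)
  have fe: "\<And>x. x \<in> S \<Longrightarrow> frechet_derivative f (at x) = frechet_derivative g (at x)"
    using fd Suc.prems(1) assms(1) by (metis frechet_derivative_transform_within_open)
  have "C_on k S (\<lambda>x. frechet_derivative g (at x) b)" if "b \<in> Basis" for b
    by (rule Suc.IH[OF _ fC[rule_format, OF that]]) (simp add: fe)
  then show ?case using d unfolding C_on_Suc_iff by blast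
qed

lemma C_on_SucI:
  assumes "open S" "\<And>x. x \<in> S \<Longrightarrow> (f has_derivative f' x) (at x)"
    "\<And>b. b \<in> Basis \<Longrightarrow> C_on k S (\<lambda>x. f' x b)"
  shows "C_on (Suc k) S f"
proof -
  have fe: "\<And>x. x \<in> S \<Longrightarrow> frechet_derivative f (at x) = f' x"
    using assms(2) frechet_derivative_at by metis
  have "C_on k S (\<lambda>x. frechet_derivative f (at x) b)" if "b \<in> Basis" for b
    by (rule C_on_cong[OF assms(1) _ assms(3)[OF that]]) (simp add: fe)
  moreover have "\<forall>x\<in>S. f differentiable (at x)" using assms(2) by (auto simp: differentiable_def)
  ultimately show ?thesis unfolding C_on_Suc_iff by blast
qed

lemma C_on_SucD:
  assumes "C_on (Suc k) S f" "x \<in> S"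
  shows "(f has_derivative frechet_derivative f (at x)) (at x)"
  using assms frechet_derivative_works unfolding C_on_Suc_iff by blast

lemma C_on_SucD2:
  assumes "C_on (Suc k) S f" "b \<in> Basis"
  shows "C_on k S (\<lambda>x. frechet_derivative f (at x) b)"
  using assms unfolding C_on_Suc_iff by blast

lemma C_on_mono:
  "C_on (Suc k) S f \<Longrightarrow> C_on k S f"
proof (induction k arbitrary: f)
  case 0
  then have "\<forall>x\<in>S. f differentiable (at x)" unfolding C_on_Suc_iff by blast
  then show ?case
    by (auto intro!: continuous_at_imp_continuous_on differentiable_imp_continuous_within)
next
  case (Suc k)
  then show ?case unfolding C_on_Suc_iff[of k] C_on_Suc_iff[of "Suc k"] by blast
qed

lemma C_on_const: "open S \<Longrightarrow> C_on k S (\<lambda>x. c)"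
proof (induction k arbitrary: c)
  case 0 then show ?case by simp
next
  case (Suc k)
  show ?case by (rule C_on_SucI[where f'="\<lambda>x h. 0"]) (use Suc in auto)
qed

lemma C_on_linear:
  assumes "open S" "bounded_linear l" shows "C_on k S l"
proof (cases k)
  case 0
  then show ?thesis using linear_continuous_on[OF assms(2)] by simp
next
  case (Suc m)
  show ?thesis unfolding Suc
    by (rule C_on_SucI[where f'="\<lambda>x. l"]) (use assms in \<open>auto intro: C_on_const bounded_linear_imp_has_derivative\<close>)
qed

lemma C_on_add: "open S \<Longrightarrow> C_on k S f \<Longrightarrow> C_on k S g \<Longrightarrow> C_on k S (\<lambda>x. f x + g x)"
proof (induction k arbitrary: f g)
  case 0 then show ?case by (auto intro: continuous_on_add)
next
  case (Suc k)
  show ?case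
  proof (rule C_on_SucI[where f'="\<lambda>x h. frechet_derivative f (at x) h + frechet_derivative g (at x) h"])
    show "open S" by fact
    show "((\<lambda>x. f x + g x) has_derivative (\<lambda>h. frechet_derivative f (at x) h + frechet_derivative g (at x) h)) (at x)"
      if "x \<in> S" for x
      by (rule has_derivative_add; rule C_on_SucD[OF _ that]) (use Suc.prems in blast)+
    show "C_on k S (\<lambda>x. frechet_derivative f (at x) b + frechet_derivative g (at x) b)" if "b \<in> Basis" for b
      by (rule Suc.IH[OF Suc.prems(1)]; rule C_on_SucD2[OF _ that]) (use Suc.prems in blast)+
  qed
qed

lemma C_on_mult: "open S \<Longrightarrow> C_on k S f \<Longrightarrow> C_on k S g \<Longrightarrow> C_on k S (\<lambda>x. f x * g x)"
proof (induction k arbitrary: f g)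
  case 0 then show ?case by (auto intro: continuous_on_mult)
next
  case (Suc k)
  have f: "C_on k S f" and g: "C_on k S g" using Suc.prems C_on_mono by blast+
  show ?case
  proof (rule C_on_SucI[where f'="\<lambda>x h. f x * frechet_derivative g (at x) h + frechet_derivative f (at x) h * g x"])
    show "open S" by fact
    show "((\<lambda>x. f x * g x) has_derivative (\<lambda>h. f x * frechet_derivative g (at x) h + frechet_derivative f (at x) h * g x)) (at x)"
      if "x \<in> S" for x
      by (rule has_derivative_mult; rule C_on_SucD[OF _ that]) (use Suc.prems in blast)+
    show "C_on k S (\<lambda>x. f x * frechet_derivative g (at x) b + frechet_derivative f (at x) b * g x)" if "b \<in> Basis" for b
      by (rule C_on_add[OF Suc.prems(1)]; rule Suc.IH[OF Suc.prems(1)])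
         (use f g C_on_SucD2[OF _ that] Suc.prems in blast)+
  qed
qed

lemma C_on_comp1:
  fixes g :: "real \<Rightarrow> real" and f :: "'a::euclidean_space \<Rightarrow> real"
  assumes "open S" "open U"
  shows "\<forall>m. C_on m U g \<Longrightarrow> \<forall>x\<in>S. f x \<in> U \<Longrightarrow> C_on k S f \<Longrightarrow> C_on k S (\<lambda>x. g (f x))"
proof (induction k arbitrary: g f)
  case 0
  have "continuous_on U g" using 0(1) by (metis C_on.simps(1))
  then show ?case using 0 by (auto intro!: continuous_on_compose2[of U g S f])
next
  case (Suc k)
  define G where "G y = frechet_derivative g (at y)" for y
  define F where "F x = frechet_derivative f (at x)" for x
  have g1: "C_on (Suc 0) U g" using Suc.prems(1) by blast
  have gd: "\<And>y. y \<in> U \<Longrightarrow> (g has_derivative G y) (at y)"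
    unfolding G_def using C_on_SucD[OF g1] by blast
  have fd: "\<And>x. x \<in> S \<Longrightarrow> (f has_derivative F x) (at x)"
    unfolding F_def using Suc.prems(3) C_on_SucD by blast
  have lin: "G y h = h * G y 1" if "y \<in> U" for y h
  proof -
    have "linear (G y)" using gd[OF that] has_derivative_linear by blast
    then show "G y h = h * G y 1" using linear_scale[of "G y" h 1] by simp
  qed
  have Gs: "\<forall>m. C_on m U (\<lambda>y. G y 1)"
  proof
    fix m
    have "C_on (Suc m) U g" using Suc.prems(1) by blast
    from C_on_SucD2[OF this, of 1] show "C_on m U (\<lambda>y. G y 1)" unfolding G_def by (simp add: Basis_real_def)
  qed
  have fk: "C_on k S f" using Suc.prems(3) C_on_mono by blast
  have IH: "C_on k S (\<lambda>x. G (f x) 1)" using Suc.IH[OF Gs Suc.prems(2) fk] .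
  show ?case
  proof (rule C_on_SucI[where f'="\<lambda>x h. G (f x) (F x h)"])
    show "open S" by fact
    show "((\<lambda>x. g (f x)) has_derivative (\<lambda>h. G (f x) (F x h))) (at x)" if "x \<in> S" for x
    proof -
      have "f x \<in> U" using Suc.prems(2) that by blast
      from has_derivative_compose[OF fd[OF that] gd[OF this]] show ?thesis .
    qed
    fix b :: 'a assume b: "b \<in> Basis"
    have "C_on k S (\<lambda>x. F x b)" unfolding F_def by (rule C_on_SucD2[OF Suc.prems(3) b])
    from C_on_mult[OF assms(1) this IH] have c: "C_on k S (\<lambda>x. F x b * G (f x) 1)" .
    have e: "F x b * G (f x) 1 = G (f x) (F x b)" if "x \<in> S" for x
    proof -
      have "f x \<in> U" using Suc.prems(2) that by blast
      from lin[OF this, of "F x b"] show ?thesis by simp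
    qed
    show "C_on k S (\<lambda>x. G (f x) (F x b))"
      by (rule C_on_cong[OF assms(1) e c])
  qed
qed

lemma C_on_Suc_real:
  fixes g :: "real \<Rightarrow> real"
  assumes "open U" "\<And>y. y \<in> U \<Longrightarrow> (g has_real_derivative g' y) (at y)" "C_on k U g'"
  shows "C_on (Suc k) U g"
proof (rule C_on_SucI[where f'="\<lambda>y. (*) (g' y)"])
  show "open U" by fact
  show "(g has_derivative (*) (g' x)) (at x)" if "x \<in> U" for x
    using assms(2)[OF that] by (simp add: has_field_derivative_def)
  show "C_on k U (\<lambda>x. g' x * b)" if "b \<in> Basis" for b
    using that assms(3) by (simp add: Basis_real_def)
qed

lemma frechet_real_deriv:
  fixes g :: "real \<Rightarrow> real"
  assumes "g differentiable (at y)"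
  shows "frechet_derivative g (at y) 1 = deriv g y"
proof -
  have "DERIV g y :> deriv g y" using assms DERIV_deriv_iff_real_differentiable by blast
  then have "(*) (deriv g y) = frechet_derivative g (at y)"
    by (simp add: has_field_derivative_def frechet_derivative_at)
  then show ?thesis by (metis mult_1_right)
qed

lemma smooth_const: "open S \<Longrightarrow> smooth_on S (\<lambda>x. c)"
  by (simp add: smooth_on_def C_on_const)

lemma smooth_linear: "open S \<Longrightarrow> bounded_linear l \<Longrightarrow> smooth_on S l"
  by (simp add: smooth_on_def C_on_linear)

lemma smooth_ident: "open (S::real set) \<Longrightarrow> smooth_on S (\<lambda>x. x)"
  using smooth_linear[of S "\<lambda>x. x"] bounded_linear_ident by auto

lemma smooth_add: "open S \<Longrightarrow> smooth_on S f \<Longrightarrow> smooth_on S g \<Longrightarrow> smooth_on S (\<lambda>x. f x + g x)"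
  by (simp add: smooth_on_def C_on_add)

lemma smooth_mult: "open S \<Longrightarrow> smooth_on S f \<Longrightarrow> smooth_on S g \<Longrightarrow> smooth_on S (\<lambda>x. f x * g x)"
  by (simp add: smooth_on_def C_on_mult)

lemma smooth_minus: assumes "open S" "smooth_on S f" shows "smooth_on S (\<lambda>x. - f x)"
proof -
  have "smooth_on S (\<lambda>x. (-1) * f x)" by (rule smooth_mult[OF assms(1) smooth_const[OF assms(1)] assms(2)])
  then show ?thesis by simp
qed

lemma smooth_diff: assumes "open S" "smooth_on S f" "smooth_on S g" shows "smooth_on S (\<lambda>x. f x - g x)"
proof -
  have "smooth_on S (\<lambda>x. f x + - g x)" by (rule smooth_add[OF assms(1,2) smooth_minus[OF assms(1,3)]])
  then show ?thesis by simp
qed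

lemma smooth_power: "open S \<Longrightarrow> smooth_on S f \<Longrightarrow> smooth_on S (\<lambda>x. f x ^ m)"
  by (induction m) (auto intro: smooth_const smooth_mult)

lemma smooth_sum:
  assumes "open S" "\<And>i. i \<in> A \<Longrightarrow> smooth_on S (f i)"
  shows "smooth_on S (\<lambda>x. \<Sum>i\<in>A. f i x)"
proof (cases "finite A")
  case True
  then show ?thesis using assms(2)
    by (induction A rule: finite_induct) (auto intro: smooth_const smooth_add assms(1))
next
  case False
  then show ?thesis using smooth_const[OF assms(1)] by simp
qed

lemma smooth_comp1:
  fixes g :: "real \<Rightarrow> real" and f :: "'a::euclidean_space \<Rightarrow> real"
  assumes "open S" "open U" "smooth_on U g" "\<And>x. x \<in> S \<Longrightarrow> f x \<in> U" "smooth_on S f"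
  shows "smooth_on S (\<lambda>x. g (f x))"
  using assms C_on_comp1[OF assms(1,2)] unfolding smooth_on_def by blast

lemma smooth_inverse_base: "smooth_on (-{0}) (inverse :: real \<Rightarrow> real)"
  unfolding smooth_on_def
proof
  fix k show "C_on k (-{0}) (inverse :: real \<Rightarrow> real)"
  proof (induction k)
    case 0
    then show ?case by (simp add: continuous_on_inverse continuous_on_id)
  next
    case (Suc k)
    have o: "open (-{0::real})" by (simp add: open_Compl)
    have c: "C_on k (-{0}) (\<lambda>y::real. - (inverse y * inverse y))"
      using C_on_mult[OF o C_on_const[OF o, of k "-1"] C_on_mult[OF o Suc Suc]] by simp
    have d: "(inverse has_real_derivative - (inverse y * inverse y)) (at y)" if "y \<in> -{0}" for y :: real
      using DERIV_inverse[of y] that by (simp add: power2_eq_square)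
    show ?case by (rule C_on_Suc_real[OF o d c])
  qed
qed

lemma smooth_inverse:
  fixes f :: "'a::euclidean_space \<Rightarrow> real"
  assumes "open S" "smooth_on S f" "\<And>x. x \<in> S \<Longrightarrow> f x \<noteq> 0"
  shows "smooth_on S (\<lambda>x. inverse (f x))"
  by (rule smooth_comp1[OF assms(1) _ smooth_inverse_base]) (use assms in \<open>auto simp: open_Compl\<close>)

lemma smooth_divide:
  fixes f :: "'a::euclidean_space \<Rightarrow> real"
  assumes "open S" "smooth_on S f" "smooth_on S g" "\<And>x. x \<in> S \<Longrightarrow> g x \<noteq> 0"
  shows "smooth_on S (\<lambda>x. f x / g x)"
  using smooth_mult[OF assms(1,2) smooth_inverse[OF assms(1,3,4)]] by (simp add: divide_inverse)

lemma smooth_sqrt_base: "smooth_on {0<..} (sqrt :: real \<Rightarrow> real)"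
  unfolding smooth_on_def
proof
  fix k show "C_on k {0<..} (sqrt :: real \<Rightarrow> real)"
  proof (induction k)
    case 0
    then show ?case by (simp add: continuous_on_real_sqrt continuous_on_id)
  next
    case (Suc k)
    have o: "open ({0<..} :: real set)" by simp
    have "C_on k {0<..} (\<lambda>y::real. inverse (sqrt y))"
      using C_on_comp1[OF o _ _ _ Suc, of "-{0}" inverse] smooth_inverse_base
      by (auto simp: smooth_on_def open_Compl)
    then have c: "C_on k {0<..} (\<lambda>y::real. inverse (sqrt y) * (1/2))"
      using C_on_mult[OF o _ C_on_const[OF o]] by blast
    have d: "(sqrt has_real_derivative inverse (sqrt y) * (1/2)) (at y)" if "y \<in> {0<..}" for y :: real
      using DERIV_real_sqrt[of y] that by simp
    show ?case by (rule C_on_Suc_real[OF o d c])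
  qed
qed

lemma smooth_sqrt:
  fixes f :: "'a::euclidean_space \<Rightarrow> real"
  assumes "open S" "smooth_on S f" "\<And>x. x \<in> S \<Longrightarrow> f x > 0"
  shows "smooth_on S (\<lambda>x. sqrt (f x))"
  by (rule smooth_comp1[OF assms(1) _ smooth_sqrt_base]) (use assms in auto)

lemma smooth_deriv1:
  fixes g :: "real \<Rightarrow> real"
  assumes "open U" "smooth_on U g"
  shows "smooth_on U (deriv g)"
  unfolding smooth_on_def
proof
  fix m
  have "C_on (Suc m) U g" using assms(2) smooth_on_def by blast
  then have "C_on m U (\<lambda>y. frechet_derivative g (at y) 1)"
       and d: "\<forall>y\<in>U. g differentiable (at y)" unfolding C_on_Suc_iff by (auto simp: Basis_real_def)
  then show "C_on m U (deriv g)"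
    using C_on_cong[OF assms(1)] frechet_real_deriv by (metis (no_types, lifting))
qed

lemma smooth_from_deriv1:
  fixes g :: "real \<Rightarrow> real"
  assumes "open U" "\<And>y. y \<in> U \<Longrightarrow> (g has_real_derivative g' y) (at y)" "smooth_on U g'"
  shows "smooth_on U g"
  unfolding smooth_on_def
proof
  fix k
  have "C_on (Suc k) U g" using C_on_Suc_real[OF assms(1,2)] assms(3) smooth_on_def by blast
  then show "C_on k U g" using C_on_mono by blast
qed

lemma powr32: "(x::real) > 0 \<Longrightarrow> x powr (3/2) = x * sqrt x"
proof -
  assume "x > 0"
  then show ?thesis using powr_add[where x=x and a=1 and b="1/2"] by (simp add: powr_half_sqrt)
qed

lemma term_deriv:
  assumes "0 < e * (a - r)"
  shows "((\<lambda>a. x / sqrt (e * (a - r))) has_real_derivative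
           - (x * e) / (2 * (e * (a - r)) * sqrt (e * (a - r)))) (at a)"
proof -
  have "((\<lambda>a. e * (a - r)) has_real_derivative e) (at a)"
    by (auto intro!: derivative_eq_intros)
  from DERIV_chain2[OF DERIV_real_sqrt[OF assms] this]
  have "((\<lambda>a. sqrt (e * (a - r))) has_real_derivative inverse (sqrt (e * (a - r))) / 2 * e) (at a)" .
  from DERIV_divide[OF DERIV_const[of x] this] 
  moreover have "e \<noteq> 0" "a \<noteq> r" using assms by auto
  ultimately show ?thesis using assms by (simp add: field_simps)
qed

lemma alg3:
  fixes p q w x :: real
  assumes "p > 0" "q > 0" "w > 0"
  shows "p * p * p * x / (2 * (p * p * (q * q)/(w * w)) * (p * q/w)) = x * (w * w) * w/(2 * (q * q) * q)"
  using assms by (simp add: field_simps)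

lemma term_alg:
  fixes K B A D x ee :: real
  assumes "K > 0" "B > 0" "A > 0" "D = K * B / A" "ee * ee = 1"
  shows "- ((- ee * K powr (3/2) * x) * ee) / (2 * D * sqrt D) = x * A * sqrt A / (2 * B * sqrt B)"
proof -
  define sK sB sA where "sK = sqrt K" and "sB = sqrt B" and "sA = sqrt A"
  have p: "sK > 0" "sB > 0" "sA > 0" using assms unfolding sK_def sB_def sA_def by auto
  have K: "K = sK * sK" and B: "B = sB * sB" and A: "A = sA * sA"
    using assms unfolding sK_def sB_def sA_def by auto
  have sD: "sqrt D = sK * sB / sA" using assms unfolding sK_def sB_def sA_def
    by (simp add: real_sqrt_mult real_sqrt_divide)
  have kk: "K powr (3/2) = K * sqrt K" using powr32 assms by blast
  have e1: "- ((- ee * K powr (3/2) * x) * ee) = sK * sK * sK * x"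
    using assms(5) kk unfolding sK_def[symmetric] K[symmetric] by (simp add: algebra_simps)
  have e2: "2 * D * sqrt D = 2 * (sK * sK * (sB * sB)/(sA * sA)) * (sK * sB/sA)"
    using sD assms(4) K B A by simp
  have e3: "x * A * sqrt A/(2 * B * sqrt B) = x * (sA * sA) * sA/(2 * (sB * sB) * sB)"
    using A B unfolding sA_def sB_def by simp
  show ?thesis unfolding e1 e2 e3 using alg3[OF p] by simp
qed

lemma term_alg1:
  fixes A x :: real
  assumes "A > 0" "A' = 1 - 1 / A"
  shows "- (x * (-1)) / (2 * (-1 * (A' - 1)) * sqrt (-1 * (A' - 1))) = x * A * sqrt A / 2"
proof -
  define sA where "sA = sqrt A"
  have p: "sA > 0" and A: "A = sA * sA" using assms unfolding sA_def by auto
  have h: "-1 * (A' - 1) = 1 / (sA * sA)" using assms A by simp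
  have h2: "sqrt (1/(sA * sA)) = 1 / sA" using p by (simp add: real_sqrt_divide)
  show ?thesis unfolding h h2 unfolding A sA_def[symmetric] using p by (simp add: field_simps)
qed

lemma acoord_deriv: "(acoord has_real_derivative 2 * u / (1 + u\<^sup>2)\<^sup>2) (at u)"
proof -
  have "1 + u\<^sup>2 \<noteq> 0" by (metis power2_less_0 add_pos_nonneg zero_less_one less_numeral_extra(3) zero_le_power2)
  have "((\<lambda>u. u\<^sup>2 / (1 + u\<^sup>2)) has_real_derivative 2 * u / (1 + u\<^sup>2)\<^sup>2) (at u)"
    by (rule derivative_eq_intros refl | use \<open>1 + u\<^sup>2 \<noteq> 0\<close> in \<open>simp add: field_simps power2_eq_square\<close>)+
  then show ?thesis unfolding acoord_def[abs_def] .
qed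

lemma deriv_acoord: "deriv acoord u = 2 * u / (1 + u\<^sup>2)\<^sup>2"
  using acoord_deriv DERIV_imp_deriv by blast

lemma acoord_range: "u > 0 \<Longrightarrow> 0 < acoord u \<and> acoord u < 1"
proof -
  assume "u > 0"
  then have p: "u\<^sup>2 > 0" by simp
  then have q: "1 + u\<^sup>2 > 0" by linarith
  show ?thesis unfolding acoord_def using p q by (simp add: pos_divide_less_eq)
qed

lemma Delta_alg:
  fixes ee aa u :: real
  assumes "aa \<noteq> 0"
  shows "ee * (u\<^sup>2 / (1 + u\<^sup>2) - aa) = (- ee * aa) * (1 + (1 - 1 / aa) * u\<^sup>2) / (1 + u\<^sup>2)"
proof -
  have p: "1 + u\<^sup>2 \<noteq> 0" by (metis power2_less_0 add_pos_nonneg zero_less_one less_numeral_extra(3) zero_le_power2)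
  have h: "(- ee * aa) * (1 + (1 - 1/aa) * u\<^sup>2) = ee * (u\<^sup>2 - aa * (1 + u\<^sup>2))"
    using assms by (simp add: field_simps)
  have "ee * (u\<^sup>2 / (1 + u\<^sup>2) - aa) = ee * (u\<^sup>2 - aa * (1 + u\<^sup>2)) / (1 + u\<^sup>2)"
    using p by (simp add: field_simps)
  then show ?thesis unfolding h .
qed

locale prop17 =
  fixes n :: nat and av :: "nat \<Rightarrow> real" and c :: real and xi :: "nat \<Rightarrow> real"
    and r e xp :: "nat \<Rightarrow> real" and mu :: "real \<Rightarrow> real" and rho :: "nat \<Rightarrow> real"
  assumes n2: "n \<ge> 2"
    and outside: "\<forall>i\<in>{2..n}. av i < 0 \<or> av i > 1"
    and cpos: "c > 0"
    and xipos: "\<forall>i\<in>{2..n}. xi i > 0"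
    and r_def: "r = (\<lambda>i. if i = 1 then 1 else av i)"
    and e_def: "e = (\<lambda>i. if i = 1 then -1 else if av i < 0 then 1 else -1)"
    and xp_def: "xp = (\<lambda>i. if i = 1 then c
                    else - e i * (- e i * av i) powr (3/2) * xi i)"
    and rho_def: "rho = (\<lambda>i. 1 - 1 / av i)"
    and mu_def: "mu = (\<lambda>u. c + (\<Sum>i=2..n. xi i / (1 + rho i * u\<^sup>2) powr (3/2)))"
begin

lemma e_cases: "i \<in> {2..n} \<Longrightarrow> (av i < 0 \<and> e i = 1) \<or> (av i > 1 \<and> e i = -1)"
  using outside unfolding e_def by auto

lemma K_pos: "i \<in> {2..n} \<Longrightarrow> - e i * av i > 0"
  using e_cases by fastforce

lemma ee1: "i \<in> {2..n} \<Longrightarrow> e i * e i = 1"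
  using e_cases by fastforce

lemma rho_gt: "i \<in> {2..n} \<Longrightarrow> rho i > 0 \<and> rho i \<noteq> 1"
proof -
  assume i: "i \<in> {2..n}"
  then consider "av i < 0" | "av i > 1" using outside by blast
  then show ?thesis
  proof cases
    case 1
    then have "1 / av i < 0" by simp
    then show ?thesis unfolding rho_def by simp
  next
    case 2
    then have "1 / av i < 1" "1 / av i > 0" by auto
    then show ?thesis unfolding rho_def by simp
  qed
qed

lemma rho_range: "\<forall>i\<in>{2..n}. rho i \<in> {0<..<1} \<union> {1<..}"
proof
  fix i assume i: "i \<in> {2..n}"
  then consider "av i < 0" | "av i > 1" using outside by blast
  then show "rho i \<in> {0<..<1} \<union> {1<..}"
  proof cases
    case 1
    then have "1 / av i < 0" by simp
    then show ?thesis unfolding rho_def by simp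
  next
    case 2
    then have "1 / av i < 1" "1 / av i > 0" by auto
    then show ?thesis unfolding rho_def by simp
  qed
qed

lemma B_pos: "i \<in> {2..n} \<Longrightarrow> 1 + rho i * u\<^sup>2 > 0"
proof -
  assume i: "i \<in> {2..n}"
  have "rho i * u\<^sup>2 \<ge> 0" using rho_gt[OF i] by simp
  then show ?thesis by linarith
qed

lemma r_i: "i \<in> {2..n} \<Longrightarrow> r i = av i" unfolding r_def by auto
lemma e_1: "e 1 = -1" unfolding e_def by auto
lemma r_1: "r 1 = 1" unfolding r_def by auto
lemma xp_1: "xp 1 = c" unfolding xp_def by auto
lemma e_1': "e (Suc 0) = -1" unfolding e_def by auto
lemma r_1': "r (Suc 0) = 1" unfolding r_def by auto
lemma xp_1': "xp (Suc 0) = c" unfolding xp_def by auto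
lemma xp_i: "i \<in> {2..n} \<Longrightarrow> xp i = - e i * (- e i * av i) powr (3/2) * xi i" unfolding xp_def by auto

lemma Delta_pos: "i \<in> {1..n} \<Longrightarrow> 0 < a \<Longrightarrow> a < 1 \<Longrightarrow> 0 < e i * (a - r i)"
proof -
  assume i: "i \<in> {1..n}" and a: "0 < a" "a < 1"
  show ?thesis
  proof (cases "i = 1")
    case True
    then have "e i = -1" "r i = 1" using e_1 r_1 by auto
    then show ?thesis using a by simp
  next
    case False
    then have "i \<in> {2..n}" using i by auto
    then show ?thesis using e_cases[of i] r_i[of i] a by auto
  qed
qed

lemma Delta_acoord: "i \<in> {2..n} \<Longrightarrow> e i * (acoord u - r i) = (- e i * av i) * (1 + rho i * u\<^sup>2) / (1 + u\<^sup>2)"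
proof -
  assume i: "i \<in> {2..n}"
  have p: "1 + u\<^sup>2 \<noteq> 0" by (metis power2_less_0 add_pos_nonneg zero_less_one less_numeral_extra(3) zero_le_power2)
  have "av i \<noteq> 0" using e_cases[OF i] by auto
  then show ?thesis using Delta_alg[of "av i" "e i" u] r_i[OF i] unfolding acoord_def rho_def
    by simp
qed

lemma xcon_eq: "xcon n e r xp = (\<lambda>a. \<Sum>i=1..n. xp i / sqrt (e i * (a - r i)))"
  by (rule ext) (simp add: xcon_def Delta_def)

lemma part1: "\<forall>a\<in>{0<..<1::real}. xcon n e r xp a =
        c / sqrt (1 - a)
        - (\<Sum>i=2..n. e i * (- e i * av i) powr (3/2) * xi i / sqrt (e i * (a - av i)))"
proof
  fix a :: real assume "a \<in> {0<..<1}"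
  have "xcon n e r xp a = xp 1 / sqrt (e 1 * (a - r 1)) + (\<Sum>i=2..n. xp i / sqrt (e i * (a - r i)))"
    unfolding xcon_eq using n2 by (simp add: sum.atLeast_Suc_atMost numeral_2_eq_2)
  also have "(\<Sum>i=2..n. xp i / sqrt (e i * (a - r i))) = - (\<Sum>i=2..n. e i * (- e i * av i) powr (3/2) * xi i / sqrt (e i * (a - av i)))"
  proof -
    have "(\<Sum>i=2..n. xp i / sqrt (e i * (a - r i))) = (\<Sum>i=2..n. - (e i * (- e i * av i) powr (3/2) * xi i / sqrt (e i * (a - av i))))"
      by (rule sum.cong[OF refl]) (simp add: xp_i r_i)
    then show ?thesis by (simp add: sum_negf)
  qed
  finally show "xcon n e r xp a = c / sqrt (1 - a) - (\<Sum>i=2..n. e i * (- e i * av i) powr (3/2) * xi i / sqrt (e i * (a - av i)))"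
    by (simp add: xp_1 e_1 r_1 xp_1' e_1' r_1')
qed

lemma xcon_deriv: "0 < a \<Longrightarrow> a < 1 \<Longrightarrow> (xcon n e r xp has_real_derivative
   (\<Sum>i=1..n. - (xp i * e i) / (2 * (e i * (a - r i)) * sqrt (e i * (a - r i))))) (at a)"
  unfolding xcon_eq by (rule DERIV_sum) (rule term_deriv, rule Delta_pos; simp)

lemma mu_eq: "mu u = c + (\<Sum>i=2..n. xi i / ((1 + rho i * u\<^sup>2) * sqrt (1 + rho i * u\<^sup>2)))"
  unfolding mu_def by (simp, rule sum.cong[OF refl]) (simp add: powr32 B_pos)

lemma dx_formula:
  assumes u: "u > 0"
  shows "deriv (xcon n e r xp) (acoord u) = (1 + u\<^sup>2) * sqrt (1 + u\<^sup>2) / 2 * mu u"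
proof -
  define A where "A = 1 + u\<^sup>2"
  have A: "A > 0" unfolding A_def by (simp add: add_pos_nonneg)
  define T where "T i = - (xp i * e i) / (2 * (e i * (acoord u - r i)) * sqrt (e i * (acoord u - r i)))" for i
  have "deriv (xcon n e r xp) (acoord u) = (\<Sum>i=1..n. T i)"
    unfolding T_def using xcon_deriv acoord_range[OF u] DERIV_imp_deriv by blast
  also have "\<dots> = T 1 + (\<Sum>i=2..n. T i)"
    using n2 by (simp add: sum.atLeast_Suc_atMost numeral_2_eq_2)
  also have "T 1 = c * A * sqrt A / 2"
    unfolding T_def xp_1 e_1 r_1
    by (rule term_alg1[OF A]) (use A in \<open>simp add: acoord_def A_def field_simps\<close>)
  also have "(\<Sum>i=2..n. T i) = (\<Sum>i=2..n. xi i * A * sqrt A / (2 * (1 + rho i * u\<^sup>2) * sqrt (1 + rho i * u\<^sup>2)))"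
  proof (rule sum.cong[OF refl])
    fix i assume i: "i \<in> {2..n}"
    show "T i = xi i * A * sqrt A / (2 * (1 + rho i * u\<^sup>2) * sqrt (1 + rho i * u\<^sup>2))"
      unfolding T_def xp_i[OF i]
      by (rule term_alg[OF K_pos[OF i] B_pos[OF i] A _ ee1[OF i]]) (simp add: Delta_acoord[OF i] A_def)
  qed
  finally show ?thesis unfolding mu_eq A_def
    by (simp add: sum_distrib_left sum_divide_distrib algebra_simps)
qed

end

lemma smooth_cong:
  assumes "open S" "\<And>x. x \<in> S \<Longrightarrow> f x = g x" "smooth_on S f"
  shows "smooth_on S g"
  using assms C_on_cong unfolding smooth_on_def by metis

lemma open_fst_pos: "open {p :: real \<times> 'b::topological_space. fst p > 0}"
proof -
  have "{p :: real \<times> 'b. fst p > 0} = {0<..} \<times> UNIV" by auto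
  then show ?thesis by (simp add: open_Times)
qed

lemma smooth_fst: "open S \<Longrightarrow> smooth_on S (\<lambda>q::real \<times> 'b::euclidean_space. fst q)"
  by (rule smooth_linear) (auto intro: bounded_linear_fst)

lemma smooth_fst_snd: "open S \<Longrightarrow> smooth_on S (\<lambda>q::real \<times> real \<times> 'b::euclidean_space. fst (snd q))"
  by (rule smooth_linear) (auto intro: bounded_linear_compose[OF bounded_linear_fst bounded_linear_snd])

lemma smooth_fst_snd_snd: "open S \<Longrightarrow> smooth_on S (\<lambda>q::real \<times> real \<times> real \<times> real. fst (snd (snd q)))"
  by (rule smooth_linear) (auto intro: bounded_linear_compose[OF bounded_linear_fst bounded_linear_compose[OF bounded_linear_snd bounded_linear_snd]])

lemma smooth_snd_snd_snd: "open S \<Longrightarrow> smooth_on S (\<lambda>q::real \<times> real \<times> real \<times> real. snd (snd (snd q)))"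
  by (rule smooth_linear) (auto intro: bounded_linear_compose[OF bounded_linear_snd bounded_linear_compose[OF bounded_linear_snd bounded_linear_snd]])

lemma smooth_inv1:
  fixes f :: "real \<Rightarrow> real"
  assumes U: "open U" and V: "open V" and bij: "bij_betw f U V" and sf: "smooth_on U f"
    and d0: "\<And>x. x \<in> U \<Longrightarrow> deriv f x \<noteq> 0"
  shows "smooth_on V (inv_into U f)"
proof -
  define g where "g = inv_into U f"
  have fdiff: "DERIV f x :> deriv f x" if "x \<in> U" for x
  proof -
    have "C_on (Suc 0) U f" using sf smooth_on_def by blast
    then have "f differentiable (at x)" using that unfolding C_on_Suc_iff by blast
    then show ?thesis using DERIV_deriv_iff_real_differentiable by blast
  qed
  have img: "f ` U = V" and inj: "inj_on f U" using bij unfolding bij_betw_def by auto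
  have gU: "g y \<in> U" if "y \<in> V" for y using that img unfolding g_def by (metis inv_into_into)
  have fg: "f (g y) = y" if "y \<in> V" for y using that img unfolding g_def by (metis f_inv_into_f)
  have gf: "g (f x) = x" if "x \<in> U" for x using that inj unfolding g_def by (metis inv_into_f_f)
  have cont: "isCont g y" if y: "y \<in> V" for y
  proof -
    define x where "x = g y"
    have x: "x \<in> U" "f x = y" using gU fg y unfolding x_def by auto
    obtain d where d: "d > 0" "cball x d \<subseteq> U" using U x(1) open_contains_cball by blast
    have inU: "z \<in> U" if "\<bar>z - x\<bar> \<le> d" for z
      using d(2) that by (auto simp: cball_def dist_real_def abs_minus_commute)
    have "isCont g (f x)"
      by (rule isCont_inverse_function[where f=f and g=g and x=x, OF d(1)]) (use inU gf in auto, meson DERIV_isCont fdiff inU)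
    then show ?thesis using x by simp
  qed
  have dg: "DERIV g y :> inverse (deriv f (g y))" if y: "y \<in> V" for y
  proof -
    obtain e where e: "e > 0" "ball y e \<subseteq> V" using V y open_contains_ball by blast
    have inV: "z \<in> V" if "y - e < z" "z < y + e" for z
      using e(2) that by (auto simp: ball_def dist_real_def abs_if)
    have a: "y - e < y" "y < y + e" using e by auto
    have i: "f (g z) = z" if "y - e < z" "z < y + e" for z using fg inV that by blast
    show ?thesis
      by (rule DERIV_inverse_function[OF fdiff[OF gU[OF y]] d0[OF gU[OF y]] a i cont[OF y]])
  qed
  have hs: "\<forall>m. C_on m U (\<lambda>x. inverse (deriv f x))"
    using smooth_inverse[OF U smooth_deriv1[OF U sf] d0] smooth_on_def by blast
  have "C_on k V g" for k
  proof (induction k)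
    case 0
    then show ?case using cont by (auto intro: continuous_at_imp_continuous_on)
  next
    case (Suc k)
    have "C_on k V (\<lambda>y. inverse (deriv f (g y)))"
      using C_on_comp1[OF V U hs _ Suc] gU by blast
    then show ?case using C_on_Suc_real[OF V dg] by blast
  qed
  then show ?thesis unfolding smooth_on_def g_def by blast
qed

lemma alg5:
  fixes sA u m :: real
  assumes "sA > 0" "u > 0"
  shows "(sA * sA * sA / 2 * m)\<^sup>2 / (u\<^sup>2 / (sA * sA))\<^sup>2 * (2 * u / (sA * sA)\<^sup>2)\<^sup>2 = sA * sA * m\<^sup>2 / u\<^sup>2"
  using assms by (simp add: field_simps power2_eq_square)

lemma t_term_deriv:
  fixes rr x u :: real
  assumes B: "0 < 1 + rr * u\<^sup>2"
  shows "((\<lambda>u. x * u / sqrt (1 + rr * u\<^sup>2)) has_real_derivative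
            x / ((1 + rr * u\<^sup>2) * sqrt (1 + rr * u\<^sup>2))) (at u)"
proof -
  have d1: "((\<lambda>u. 1 + rr * u\<^sup>2) has_real_derivative 2 * rr * u) (at u)"
    by (rule derivative_eq_intros refl | simp)+
  from DERIV_chain2[OF DERIV_real_sqrt[OF B] d1]
  have d2: "((\<lambda>u. sqrt (1 + rr * u\<^sup>2)) has_real_derivative inverse (sqrt (1 + rr * u\<^sup>2)) / 2 * (2 * rr * u)) (at u)" .
  have d3: "((\<lambda>u. x * u) has_real_derivative x) (at u)"
    by (rule derivative_eq_intros refl | simp)+
  define sB where "sB = sqrt (1 + rr * u\<^sup>2)"
  have sB: "sB > 0" "sB * sB = 1 + rr * u\<^sup>2" using B unfolding sB_def by auto
  have ne: "sqrt (1 + rr * u\<^sup>2) \<noteq> 0" using B by simp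
  from DERIV_divide[OF d3 d2 ne]
  show ?thesis
  proof (rule DERIV_cong)
    have "(x * sB - x * u * (inverse sB / 2 * (2 * rr * u))) / (sB * sB) = x / ((sB * sB) * sB)"
    proof -
      have "x * sB - x * u * (inverse sB / 2 * (2 * rr * u)) = x * (sB * sB - rr * u\<^sup>2) / sB"
        using sB(1) by (simp add: field_simps power2_eq_square)
      also have "\<dots> = x / sB" using sB by simp
      finally show ?thesis using sB by (simp add: field_simps)
    qed
    then show "(x * sqrt (1 + rr * u\<^sup>2) - x * u * (inverse (sqrt (1 + rr * u\<^sup>2)) / 2 * (2 * rr * u))) /
        (sqrt (1 + rr * u\<^sup>2) * sqrt (1 + rr * u\<^sup>2)) = x / ((1 + rr * u\<^sup>2) * sqrt (1 + rr * u\<^sup>2))"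
      unfolding sB_def[symmetric] unfolding sB(2)[symmetric] .
  qed
qed

context prop17
begin

lemma part3: "\<forall>a\<in>{0<..<1::real}. acoord (sqrt (a / (1 - a))) = a"
proof
  fix a :: real assume a: "a \<in> {0<..<1}"
  then have "a / (1 - a) \<ge> 0" by auto
  then have "(sqrt (a / (1 - a)))\<^sup>2 = a / (1 - a)" by simp
  moreover have "1 - a \<noteq> 0" using a by auto
  ultimately show "acoord (sqrt (a / (1 - a))) = a" unfolding acoord_def by (simp add: field_simps)
qed

lemma part2: "bij_betw acoord {0<..} {0<..<1}"
  unfolding bij_betw_def
proof
  show "inj_on acoord {0<..}"
  proof (rule inj_onI)
    fix u v :: real assume u: "u \<in> {0<..}" and v: "v \<in> {0<..}" and eq: "acoord u = acoord v"
    have p: "1 + u\<^sup>2 > 0" "1 + v\<^sup>2 > 0" by (simp_all add: add_pos_nonneg)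
    from eq have "u\<^sup>2 * (1 + v\<^sup>2) = v\<^sup>2 * (1 + u\<^sup>2)" unfolding acoord_def using p by (simp add: field_simps)
    then have "u\<^sup>2 = v\<^sup>2" by (simp add: algebra_simps)
    then show "u = v" using u v by (simp add: power2_eq_iff_nonneg)
  qed
  show "acoord ` {0<..} = {0<..<1}"
  proof
    show "acoord ` {0<..} \<subseteq> {0<..<1}" using acoord_range by auto
    show "{0<..<1} \<subseteq> acoord ` {0<..}"
    proof
      fix a :: real assume a: "a \<in> {0<..<1}"
      then have "sqrt (a / (1 - a)) > 0" by auto
      then show "a \<in> acoord ` {0<..}" using part3 a by (metis greaterThan_iff image_eqI)
    qed
  qed
qed

lemma mu_pos: "mu u > 0"
proof -
  have "(\<Sum>i=2..n. xi i / ((1 + rho i * u\<^sup>2) * sqrt (1 + rho i * u\<^sup>2))) \<ge> 0"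
    by (rule sum_nonneg) (use xipos B_pos in \<open>auto intro!: divide_nonneg_pos less_imp_le\<close>)
  then show ?thesis unfolding mu_eq using cpos by linarith
qed

lemma part5: "u > 0 \<Longrightarrow> g_aa n e r xp (acoord u) * (deriv acoord u)\<^sup>2 = (1 + u\<^sup>2) * (mu u)\<^sup>2 / u\<^sup>2"
proof -
  assume u: "u > 0"
  define sA where "sA = sqrt (1 + u\<^sup>2)"
  have sA: "sA > 0" "sA * sA = 1 + u\<^sup>2" unfolding sA_def by (auto simp: add_pos_nonneg)
  have "g_aa n e r xp (acoord u) * (deriv acoord u)\<^sup>2
      = (sA * sA * sA / 2 * mu u)\<^sup>2 / (u\<^sup>2 / (sA * sA))\<^sup>2 * (2 * u / (sA * sA)\<^sup>2)\<^sup>2"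
    unfolding g_aa_def dx_formula[OF u] deriv_acoord unfolding acoord_def sA(2) sA_def by simp
  also have "\<dots> = (1 + u\<^sup>2) * (mu u)\<^sup>2 / u\<^sup>2" using alg5[OF sA(1) u] sA(2) by simp
  finally show ?thesis .
qed

lemma gyy_eq: "u > 0 \<Longrightarrow> g_yy (acoord u) = (1 + u\<^sup>2) / u\<^sup>2"
  unfolding g_yy_def acoord_def by simp

lemma part8: "\<forall>u>0. g_aa n e r xp (acoord u) * (deriv acoord u)\<^sup>2 > 0 \<and> g_yy (acoord u) > 0"
proof (intro allI impI conjI)
  fix u :: real assume u: "u > 0"
  have "(1 + u\<^sup>2) * (mu u)\<^sup>2 / u\<^sup>2 > 0" using mu_pos[of u] u by (simp add: add_pos_nonneg)
  then show "g_aa n e r xp (acoord u) * (deriv acoord u)\<^sup>2 > 0" using part5[OF u] by simp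
  show "g_yy (acoord u) > 0" using gyy_eq[OF u] u by (simp add: add_pos_nonneg)
qed

definition tt :: "real \<Rightarrow> real" where
  "tt u = c * u + (\<Sum>i=2..n. xi i * u / sqrt (1 + rho i * u\<^sup>2))"

definition Sg :: "real \<Rightarrow> real" where
  "Sg u = c + (\<Sum>i=2..n. xi i / sqrt (1 + rho i * u\<^sup>2))"

lemma tt_deriv: "(tt has_real_derivative mu u) (at u)"
proof -
  have "((\<lambda>u. c * u + (\<Sum>i=2..n. xi i * u / sqrt (1 + rho i * u\<^sup>2))) has_real_derivative
      c + (\<Sum>i=2..n. xi i / ((1 + rho i * u\<^sup>2) * sqrt (1 + rho i * u\<^sup>2)))) (at u)"
  proof (rule DERIV_add)
    show "((\<lambda>u. c * u) has_real_derivative c) (at u)" by (rule derivative_eq_intros refl | simp)+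
    show "((\<lambda>u. \<Sum>i=2..n. xi i * u / sqrt (1 + rho i * u\<^sup>2)) has_real_derivative
      (\<Sum>i=2..n. xi i / ((1 + rho i * u\<^sup>2) * sqrt (1 + rho i * u\<^sup>2)))) (at u)"
      by (rule DERIV_sum, rule t_term_deriv, rule B_pos)
  qed
  then show ?thesis unfolding tt_def[abs_def] mu_eq .
qed

lemma deriv_tt: "deriv tt u = mu u"
  using tt_deriv DERIV_imp_deriv by blast

lemma Sg_pos: "Sg u > 0"
proof -
  have "(\<Sum>i=2..n. xi i / sqrt (1 + rho i * u\<^sup>2)) \<ge> 0"
    by (rule sum_nonneg) (use xipos B_pos in \<open>auto intro!: divide_nonneg_pos less_imp_le\<close>)
  then show ?thesis unfolding Sg_def using cpos by linarith
qed

lemma tt_Sg: "tt u = u * Sg u"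
  unfolding tt_def Sg_def by (simp add: algebra_simps sum_distrib_left)

lemma tt_ge: "u \<ge> 0 \<Longrightarrow> tt u \<ge> c * u"
proof -
  assume u: "u \<ge> 0"
  have "(\<Sum>i=2..n. xi i * u / sqrt (1 + rho i * u\<^sup>2)) \<ge> 0"
  proof (rule sum_nonneg)
    fix i assume i: "i \<in> {2..n}"
    have "xi i > 0" using xipos i by blast
    then have "xi i * u \<ge> 0" using u by simp
    moreover have "sqrt (1 + rho i * u\<^sup>2) \<ge> 0" using B_pos[OF i, of u] by simp
    ultimately show "xi i * u / sqrt (1 + rho i * u\<^sup>2) \<ge> 0" by (rule divide_nonneg_nonneg)
  qed
  then show ?thesis unfolding tt_def by linarith
qed

lemma tt_mono: "u < v \<Longrightarrow> tt u < tt v"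
  by (rule DERIV_pos_imp_increasing[where f=tt]) (use tt_deriv mu_pos in blast)+

lemma tt_bij: "bij_betw tt {0<..} {0<..}"
  unfolding bij_betw_def
proof
  show "inj_on tt {0<..}"
    by (rule inj_onI) (metis linorder_neqE_linordered_idom tt_mono less_irrefl)
  show "tt ` {0<..} = {0<..}"
  proof
    show "tt ` {0<..} \<subseteq> {0<..}" using tt_Sg Sg_pos by auto
    show "{0<..} \<subseteq> tt ` {0<..}"
    proof
      fix s :: real assume s: "s \<in> {0<..}"
      have t0: "tt 0 = 0" unfolding tt_def by simp
      have cont: "continuous_on {0..s/c} tt"
        by (rule continuous_at_imp_continuous_on) (use tt_deriv DERIV_isCont in blast)
      have "s \<le> tt (s / c)" using tt_ge[of "s/c"] s cpos by auto
      then obtain x where x: "0 \<le> x" "x \<le> s / c" "tt x = s"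
        using IVT'[of tt 0 s "s/c", OF _ _ _ cont] t0 s cpos by auto
      then have "x \<noteq> 0" using t0 s by auto
      with x show "s \<in> tt ` {0<..}" by force
    qed
  qed
qed

lemma part9_eq:
  assumes u: "u > 0"
  shows "g_aa n e r xp (acoord u) * (deriv acoord u)\<^sup>2
           = (1 + u\<^sup>2) * (Sg u)\<^sup>2 * (deriv tt u)\<^sup>2 / (tt u)\<^sup>2
         \<and> g_yy (acoord u) = (1 + u\<^sup>2) * (Sg u)\<^sup>2 / (tt u)\<^sup>2"
proof -
  have S: "Sg u \<noteq> 0" using Sg_pos[of u] by simp
  show ?thesis unfolding part5[OF u] gyy_eq[OF u] deriv_tt tt_Sg using S u
    by (simp add: field_simps power2_eq_square)
qed

end

lemmas srules = smooth_const smooth_add smooth_diff smooth_minus smooth_mult smooth_divide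
  smooth_power smooth_sum smooth_sqrt

lemma lift_fst:
  assumes "smooth_on {0<..} \<phi>"
  shows "smooth_on {p :: real \<times> 'b::euclidean_space. fst p > 0} (\<lambda>p. \<phi> (fst p))"
  by (rule smooth_comp1[OF open_fst_pos _ assms _ smooth_fst[OF open_fst_pos]]) auto

lemma acoord_fun: "acoord = (\<lambda>u. u\<^sup>2 / (1 + u\<^sup>2))"
  by (rule ext) (simp add: acoord_def)

lemma one_plus_sq_ne: "1 + (u::real)\<^sup>2 \<noteq> 0"
  by (metis power2_less_0 add_pos_nonneg zero_less_one less_numeral_extra(3) zero_le_power2)

lemma sm_acoord: "smooth_on {0<..} acoord"
  unfolding acoord_fun by (intro srules smooth_ident) (auto simp: one_plus_sq_ne)

context prop17
begin

lemma mu_fun: "mu = (\<lambda>u. c + (\<Sum>i=2..n. xi i / ((1 + rho i * u\<^sup>2) * sqrt (1 + rho i * u\<^sup>2))))"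
  by (rule ext) (rule mu_eq)

lemma tt_fun: "tt = (\<lambda>u. c * u + (\<Sum>i=2..n. xi i * u / sqrt (1 + rho i * u\<^sup>2)))"
  by (rule ext) (rule tt_def)

lemma Sg_fun: "Sg = (\<lambda>u. c + (\<Sum>i=2..n. xi i / sqrt (1 + rho i * u\<^sup>2)))"
  by (rule ext) (rule Sg_def)

lemma B_ne: "i \<in> {2..n} \<Longrightarrow> 1 + rho i * u\<^sup>2 \<noteq> 0"
  using B_pos[of i u] by simp

lemma part6: "smooth_on {p :: real \<times> real. fst p > 0}
         (\<lambda>p. g_aa n e r xp (acoord (fst p)) * (deriv acoord (fst p))\<^sup>2)"
proof -
  have h: "smooth_on {0<..} (\<lambda>u::real. (1 + u\<^sup>2) * (mu u)\<^sup>2 / u\<^sup>2)"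
    unfolding mu_fun by (intro srules smooth_ident) (auto simp: B_pos B_ne)
  have "smooth_on {0<..} (\<lambda>u. g_aa n e r xp (acoord u) * (deriv acoord u)\<^sup>2)"
    by (rule smooth_cong[OF _ _ h]) (auto simp: part5)
  then show ?thesis by (rule lift_fst)
qed

lemma part7: "smooth_on {p :: real \<times> real. fst p > 0} (\<lambda>p. g_yy (acoord (fst p)))"
proof -
  have h: "smooth_on {0<..} (\<lambda>u::real. (1 + u\<^sup>2) / u\<^sup>2)"
    by (intro srules smooth_ident) auto
  have "smooth_on {0<..} (\<lambda>u. g_yy (acoord u))"
    by (rule smooth_cong[OF _ _ h]) (auto simp: gyy_eq)
  then show ?thesis by (rule lift_fst)
qed

lemma sm_tt: "smooth_on {0<..} tt"
  unfolding tt_fun by (intro srules smooth_ident) (auto simp: B_pos B_ne)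

lemma sm_Phi: "smooth_on {p :: real \<times> real. fst p > 0} (\<lambda>p. (1 + (fst p)\<^sup>2) * (Sg (fst p))\<^sup>2)"
proof -
  have "smooth_on {0<..} (\<lambda>u::real. (1 + u\<^sup>2) * (Sg u)\<^sup>2)"
    unfolding Sg_fun by (intro srules smooth_ident) (auto simp: B_pos B_ne)
  then show ?thesis by (rule lift_fst)
qed

lemma part9: "\<exists>t Phi. diffeo_pos t \<and> smooth_on {p :: real \<times> real. fst p > 0} Phi
          \<and> (\<forall>p. fst p > 0 \<longrightarrow> Phi p > 0)
          \<and> (\<forall>u y. u > 0 \<longrightarrow>
               g_aa n e r xp (acoord u) * (deriv acoord u)\<^sup>2
                 = Phi (u, y) * (deriv t u)\<^sup>2 / (t u)\<^sup>2
               \<and> g_yy (acoord u) = Phi (u, y) / (t u)\<^sup>2)"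
proof (intro exI conjI allI impI)
  show "diffeo_pos tt" unfolding diffeo_pos_def
  proof (intro conjI)
    show "bij_betw tt {0<..} {0<..}" by (rule tt_bij)
    show "smooth_on {0<..} tt" by (rule sm_tt)
    show "smooth_on {0<..} (inv_into {0<..} tt)"
      by (rule smooth_inv1[OF _ _ tt_bij sm_tt]) (auto simp: deriv_tt, metis mu_pos less_irrefl)
  qed
  show "smooth_on {p :: real \<times> real. fst p > 0} (\<lambda>p. (1 + (fst p)\<^sup>2) * (Sg (fst p))\<^sup>2)" by (rule sm_Phi)
  show "(1 + (fst p)\<^sup>2) * (Sg (fst p))\<^sup>2 > 0" if "fst p > 0" for p :: "real \<times> real"
    using Sg_pos[of "fst p"] by (simp add: add_pos_nonneg)
  fix u y :: real assume u: "u > 0"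
  show "g_aa n e r xp (acoord u) * (deriv acoord u)\<^sup>2 =
        (1 + (fst (u, y))\<^sup>2) * (Sg (fst (u, y)))\<^sup>2 * (deriv tt u)\<^sup>2 / (tt u)\<^sup>2"
    using part9_eq[OF u] by simp
  show "g_yy (acoord u) = (1 + (fst (u, y))\<^sup>2) * (Sg (fst (u, y)))\<^sup>2 / (tt u)\<^sup>2"
    using part9_eq[OF u] by simp
qed

end

context prop17
begin

lemma e_ne: "e i \<noteq> 0" unfolding e_def by auto

lemma r_ne: "0 < x \<Longrightarrow> x < 1 \<Longrightarrow> i \<in> {1..n} \<Longrightarrow> x \<noteq> r i"
  using Delta_pos[of i x] by auto

lemma acoord_ne: "0 < u \<Longrightarrow> i \<in> {1..n} \<Longrightarrow> acoord u \<noteq> r i"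
  using r_ne acoord_range by blast

lemma sm_xcon: "smooth_on {0<..<1} (xcon n e r xp)"
  unfolding xcon_eq by (intro srules smooth_ident) (auto simp: Delta_pos e_ne r_ne)

lemma sm_dxa: "smooth_on {0<..} (\<lambda>u. deriv (xcon n e r xp) (acoord u))"
  by (rule smooth_comp1[OF _ _ smooth_deriv1[OF _ sm_xcon] _ sm_acoord]) (auto simp: acoord_range)

lemma dx_pos: "u > 0 \<Longrightarrow> deriv (xcon n e r xp) (acoord u) > 0"
  unfolding dx_formula using mu_pos[of u] by (simp add: add_pos_nonneg)

definition S4 :: "(real \<times> real \<times> real \<times> real) set" where
  "S4 = {q. fst q > 0}"

lemma o4: "open S4" unfolding S4_def by (rule open_fst_pos)

lemma at1: "smooth_on S4 (\<lambda>q. acoord (fst q))"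
  unfolding S4_def by (rule lift_fst[OF sm_acoord])

lemma at2: "smooth_on S4 (\<lambda>q. deriv (xcon n e r xp) (acoord (fst q)))"
  unfolding S4_def by (rule lift_fst[OF sm_dxa])

lemma DP4: "q \<in> S4 \<Longrightarrow> i \<in> {1..n} \<Longrightarrow> 0 < e i * (acoord (fst q) - r i)"
  unfolding S4_def using Delta_pos acoord_range by auto

lemma DP4': "q \<in> S4 \<Longrightarrow> i \<in> {1..n} \<Longrightarrow> e i * (acoord (fst q) - r i) \<noteq> 0"
  using DP4 by fastforce

lemma dx4: "q \<in> S4 \<Longrightarrow> deriv (xcon n e r xp) (acoord (fst q)) \<noteq> 0"
  unfolding S4_def using dx_pos by fastforce

lemma fst4: "q \<in> S4 \<Longrightarrow> fst q \<noteq> 0"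
  unfolding S4_def by auto

lemmas atoms4 = smooth_fst[OF o4] smooth_fst_snd[OF o4] smooth_fst_snd_snd[OF o4] smooth_snd_snd_snd[OF o4] at1 at2

lemma S1_lam: "(\<lambda>(u, y, Pu, Py). S1con n e r xp (acoord u) y (Pu / deriv acoord u) Py)
   = (\<lambda>q. S1con n e r xp (acoord (fst q)) (fst (snd q)) (fst (snd (snd q)) / deriv acoord (fst q)) (snd (snd (snd q))))"
  by (rule ext) (simp add: split_beta)

lemma S2_lam: "(\<lambda>(u, y, Pu, Py). S2con n e r xp (acoord u) y (Pu / deriv acoord u) Py)
   = (\<lambda>q. S2con n e r xp (acoord (fst q)) (fst (snd q)) (fst (snd (snd q)) / deriv acoord (fst q)) (snd (snd (snd q))))"
  by (rule ext) (simp add: split_beta)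

lemma part10: "smooth_on {q :: real \<times> real \<times> real \<times> real. fst q > 0}
         (\<lambda>(u, y, Pu, Py). S1con n e r xp (acoord u) y (Pu / deriv acoord u) Py)"
  unfolding S1_lam S4_def[symmetric]
  unfolding S1con_def Q1con_def Gcon_def Hcon_def Picon_def btil_def Delta_def deriv_acoord
  by (intro srules atoms4) (auto simp: open_fst_pos o4 DP4 DP4' dx4 fst4 one_plus_sq_ne e_ne acoord_ne S4_def dx_pos less_imp_neq[OF dx_pos, symmetric])

lemma part11: "smooth_on {q :: real \<times> real \<times> real \<times> real. fst q > 0}
         (\<lambda>(u, y, Pu, Py). S2con n e r xp (acoord u) y (Pu / deriv acoord u) Py)"
  unfolding S2_lam S4_def[symmetric]
  unfolding S2con_def Q1con_def Q2con_def Gcon_def Hcon_def Picon_def btil_def ctil_def Delta_def deriv_acoord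
  by (intro srules atoms4) (auto simp: open_fst_pos o4 DP4 DP4' dx4 fst4 one_plus_sq_ne e_ne acoord_ne S4_def dx_pos less_imp_neq[OF dx_pos, symmetric])

end

theorem proposition17:
  fixes n :: nat and av :: "nat \<Rightarrow> real" and c :: real and xi :: "nat \<Rightarrow> real"
    and r e xp :: "nat \<Rightarrow> real" and mu :: "real \<Rightarrow> real" and rho :: "nat \<Rightarrow> real"
  assumes n2: "n \<ge> 2"
    and distinct: "\<forall>i\<in>{2..n}. \<forall>j\<in>{2..n}. i \<noteq> j \<longrightarrow> av i \<noteq> av j"
    and outside: "\<forall>i\<in>{2..n}. av i < 0 \<or> av i > 1"
    and cpos: "c > 0"
    and xipos: "\<forall>i\<in>{2..n}. xi i > 0"
    and r_def: "r = (\<lambda>i. if i = 1 then 1 else av i)"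
    and e_def: "e = (\<lambda>i. if i = 1 then -1 else if av i < 0 then 1 else -1)"
    and xp_def: "xp = (\<lambda>i. if i = 1 then c
                    else - e i * (- e i * av i) powr (3/2) * xi i)"
    and rho_def: "rho = (\<lambda>i. 1 - 1 / av i)"
    and mu_def: "mu = (\<lambda>u. c + (\<Sum>i=2..n. xi i / (1 + rho i * u\<^sup>2) powr (3/2)))"
  shows
    "(\<forall>a\<in>{0<..<1::real}. xcon n e r xp a =
        c / sqrt (1 - a)
        - (\<Sum>i=2..n. e i * (- e i * av i) powr (3/2) * xi i / sqrt (e i * (a - av i))))
     \<and> bij_betw acoord {0<..} {0<..<1}
     \<and> (\<forall>a\<in>{0<..<1::real}. acoord (sqrt (a / (1 - a))) = a)
     \<and> (\<forall>i\<in>{2..n}. rho i \<in> {0<..<1} \<union> {1<..})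
     \<and> (\<forall>u>0. g_aa n e r xp (acoord u) * (deriv acoord u)\<^sup>2 = (1 + u\<^sup>2) * (mu u)\<^sup>2 / u\<^sup>2
             \<and> g_yy (acoord u) = (1 + u\<^sup>2) / u\<^sup>2)
     \<and> smooth_on {p :: real \<times> real. fst p > 0}
         (\<lambda>p. g_aa n e r xp (acoord (fst p)) * (deriv acoord (fst p))\<^sup>2)
     \<and> smooth_on {p :: real \<times> real. fst p > 0} (\<lambda>p. g_yy (acoord (fst p)))
     \<and> (\<forall>u>0. g_aa n e r xp (acoord u) * (deriv acoord u)\<^sup>2 > 0 \<and> g_yy (acoord u) > 0)
     \<and> (\<exists>t Phi. diffeo_pos t \<and> smooth_on {p :: real \<times> real. fst p > 0} Phi
          \<and> (\<forall>p. fst p > 0 \<longrightarrow> Phi p > 0)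
          \<and> (\<forall>u y. u > 0 \<longrightarrow>
               g_aa n e r xp (acoord u) * (deriv acoord u)\<^sup>2
                 = Phi (u, y) * (deriv t u)\<^sup>2 / (t u)\<^sup>2
               \<and> g_yy (acoord u) = Phi (u, y) / (t u)\<^sup>2))
     \<and> smooth_on {q :: real \<times> real \<times> real \<times> real. fst q > 0}
         (\<lambda>(u, y, Pu, Py). S1con n e r xp (acoord u) y (Pu / deriv acoord u) Py)
     \<and> smooth_on {q :: real \<times> real \<times> real \<times> real. fst q > 0}
         (\<lambda>(u, y, Pu, Py). S2con n e r xp (acoord u) y (Pu / deriv acoord u) Py)"
  proof -
  interpret P: prop17 n av c xi r e xp mu rho
    by (rule prop17.intro) (fact n2 outside cpos xipos r_def e_def xp_def rho_def mu_def)+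
  show ?thesis
  proof (intro conjI)
    show "\<forall>a\<in>{0<..<1::real}. xcon n e r xp a =
        c / sqrt (1 - a)
        - (\<Sum>i=2..n. e i * (- e i * av i) powr (3/2) * xi i / sqrt (e i * (a - av i)))"
      by (rule P.part1)
    show "bij_betw acoord {0<..} {0<..<1}" by (rule P.part2)
    show "\<forall>a\<in>{0<..<1::real}. acoord (sqrt (a / (1 - a))) = a" by (rule P.part3)
    show "\<forall>i\<in>{2..n}. rho i \<in> {0<..<1} \<union> {1<..}" by (rule P.rho_range)
    show "\<forall>u>0. g_aa n e r xp (acoord u) * (deriv acoord u)\<^sup>2 = (1 + u\<^sup>2) * (mu u)\<^sup>2 / u\<^sup>2
             \<and> g_yy (acoord u) = (1 + u\<^sup>2) / u\<^sup>2"
      using P.part5 P.gyy_eq by blast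
  qed (fact P.part6 P.part7 P.part8 P.part9 P.part10 P.part11)+
qed

end
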